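(* Let $\alpha>0$ be fixed, and for each integer $t\ge 1$ let $\mathbf{h}=[h_1\cdots h_t]^T\sim\mathrm{CN}(\mathbf{I}_t)$ and $\mathbf{h}_k=[h_1\cdots h_k]^T$. Define the full-CSI outage probability $\mathtt{out}(\mathtt{F})=\mathrm{P}(\|\mathbf{h}\|^2\le\alpha)$ and the open-loop outage probability $\mathtt{out}(\mathtt{G})=\mathrm{P}(\|\mathbf{h}_{\kappa}\|^2<\kappa\alpha)$, where $\kappa=\arg\min_{k\in\{1,\ldots,t\}}\mathrm{P}(\|\mathbf{h}_k\|^2<k\alpha)$ (ties broken in favor of the smallest $k$). Then, as $t\to\infty$: $\mathtt{out}(\mathtt{F})\in\Theta\!\left(\frac{\alpha^t}{t!}\right)$ for every $\alpha>0$; $\mathtt{out}(\mathtt{G})\in\Theta\!\left(\frac{(t\alpha)^t e^{-\alpha t}}{t!}\right)$ if $0<\alpha<1$; and $\mathtt{out}(\mathtt{G})\in\Theta(1)$ if $\alpha\ge 1$.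
   Context: $\mathrm{CN}(\mathbf{I}_t)$ denotes the circularly-symmetric complex Gaussian vector with identity covariance, i.e. $h_1,\ldots,h_t$ are i.i.d. standard complex Gaussian. $\mathtt{out}(\mathtt{F})$ is the minimum outage probability of a MISO system with perfect transmitter and receiver channel knowledge (beamforming along $\mathbf{h}/\|\mathbf{h}\|$), and $\mathtt{out}(\mathtt{G})$ that of the optimal open-loop scheme (equal-power transmission on the first $\kappa$ antennas). $\Theta$ is the standard Bachmann–Landau symbol with respect to $t\to\infty$, $\alpha$ fixed. *)

theory Defs
  imports "HOL-Probability.Probability" "HOL-Library.Landau_Symbols"
begin

text \<open>Standard circularly-symmetric complex Gaussian CN(0,1): real and imaginary
  parts independent N(0,1/2).\<close>
definition cn_std :: "complex measure" where
  "cn_std = distr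
     (density lborel (normal_density 0 (sqrt (1/2))) \<Otimes>\<^sub>M
      density lborel (normal_density 0 (sqrt (1/2))))
     borel (\<lambda>(x, y). Complex x y)"

text \<open>Law of h = [h_1 ... h_t]^T ~ CN(I_t); coordinates indexed 0..t-1.\<close>
definition h_law :: "nat \<Rightarrow> (nat \<Rightarrow> complex) measure" where
  "h_law t = (\<Pi>\<^sub>M i\<in>{0..<t}. cn_std)"

definition sqnorm_k :: "nat \<Rightarrow> (nat \<Rightarrow> complex) \<Rightarrow> real" where
  "sqnorm_k k h = (\<Sum>i<k. (cmod (h i))\<^sup>2)"

definition out_F :: "real \<Rightarrow> nat \<Rightarrow> real" where
  "out_F \<alpha> t = measure (h_law t) {h \<in> space (h_law t). sqnorm_k t h \<le> \<alpha>}"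

definition p_open :: "real \<Rightarrow> nat \<Rightarrow> nat \<Rightarrow> real" where
  "p_open \<alpha> t k = measure (h_law t) {h \<in> space (h_law t). sqnorm_k k h < real k * \<alpha>}"

definition kappa :: "real \<Rightarrow> nat \<Rightarrow> nat" where
  "kappa \<alpha> t = (LEAST k. k \<in> {1..t} \<and> (\<forall>j\<in>{1..t}. p_open \<alpha> t k \<le> p_open \<alpha> t j))"

definition out_G :: "real \<Rightarrow> nat \<Rightarrow> real" where
  "out_G \<alpha> t = p_open \<alpha> t (kappa \<alpha> t)"

end

theory Submission
  imports Defs
begin

lemma nn_integral_even:
  fixes f :: "real \<Rightarrow> ennreal"
  assumes [measurable]: "f \<in> borel_measurable borel" and ev: "\<And>x. f (-x) = f x"
  shows "(\<integral>\<^sup>+x. f x \<partial>lborel) = 2 * (\<integral>\<^sup>+x. f x * indicator {0<..} x \<partial>lborel)"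
proof -
  have "(\<integral>\<^sup>+x. f x \<partial>lborel) = (\<integral>\<^sup>+x. f x * indicator {0<..} x + f x * indicator {..0} x \<partial>lborel)"
    by (intro nn_integral_cong) (auto split: split_indicator)
  also have "\<dots> = (\<integral>\<^sup>+x. f x * indicator {0<..} x \<partial>lborel) + (\<integral>\<^sup>+x. f x * indicator {..0} x \<partial>lborel)"
    by (intro nn_integral_add) auto
  also have "(\<integral>\<^sup>+x. f x * indicator {..0} x \<partial>lborel) = (\<integral>\<^sup>+x. f (0 + (-1) * x) * indicator {..0} (0 + (-1) * x) \<partial>lborel)"
    using nn_integral_real_affine[of "\<lambda>x. f x * indicator {..0} x" "-1" 0] by simp
  also have "\<dots> = (\<integral>\<^sup>+x. f x * indicator {0..} x \<partial>lborel)"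
    by (intro nn_integral_cong) (auto simp: ev split: split_indicator)
  also have "\<dots> = (\<integral>\<^sup>+x. f x * indicator {0<..} x \<partial>lborel)"
    by (intro nn_integral_cong_AE AE_I[where N="{0}"]) (auto split: split_indicator)
  finally show ?thesis by (simp add: mult_2)
qed

lemma inner_x:
  fixes a c :: real assumes a: "0 \<le> a" and c: "0 < c"
  shows "(\<integral>\<^sup>+x. ennreal (x * exp (- (x\<^sup>2 * c))) * indicator {..a} (x\<^sup>2 * c) * indicator {0<..} x \<partial>lborel)
     = ennreal ((1 - exp (- a)) / (2 * c))"
proof -
  define b where "b = sqrt (a / c)"
  have b: "0 \<le> b" "b\<^sup>2 * c = a" using a c by (auto simp: b_def)
  have iff: "x\<^sup>2 * c \<le> a \<longleftrightarrow> x \<le> b" if "0 < x" for x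
  proof -
    have "x\<^sup>2 * c \<le> a \<longleftrightarrow> x\<^sup>2 * c \<le> b\<^sup>2 * c" using b by simp
    also have "\<dots> \<longleftrightarrow> x\<^sup>2 \<le> b\<^sup>2" using c by simp
    also have "\<dots> \<longleftrightarrow> x \<le> b" using that b by (simp add: power_mono_iff)
    finally show ?thesis .
  qed
  have "(\<integral>\<^sup>+x. ennreal (x * exp (- (x\<^sup>2 * c))) * indicator {..a} (x\<^sup>2 * c) * indicator {0<..} x \<partial>lborel)
      = (\<integral>\<^sup>+x. ennreal (x * exp (- (x\<^sup>2 * c))) * indicator {0..b} x \<partial>lborel)"
    by (intro nn_integral_cong_AE AE_I[where N="{0}"]) (auto simp: iff split: split_indicator)
  also have "\<dots> = ennreal ((\<lambda>x. - exp (- (x\<^sup>2 * c)) / (2 * c)) b - (\<lambda>x. - exp (- (x\<^sup>2 * c)) / (2 * c)) 0)"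
    using c b by (intro nn_integral_FTC_Icc) (auto intro!: derivative_eq_intros simp: field_simps power2_eq_square)
  also have "\<dots> = ennreal ((1 - exp (- a)) / (2 * c))"
    using c b by (simp add: field_simps)
  finally show ?thesis .
qed

lemma quadrant:
  fixes a :: real assumes a: "0 \<le> a"
  shows "(\<integral>\<^sup>+x. \<integral>\<^sup>+y. ennreal (exp (- x\<^sup>2) * exp (- y\<^sup>2)) * indicator {..a} (x\<^sup>2 + y\<^sup>2)
            * indicator {0<..} y * indicator {0<..} x \<partial>lborel \<partial>lborel)
       = ennreal (pi / 4 * (1 - exp (- a)))"
proof -
  let ?ff = "\<lambda>x s. ennreal (x * exp (- (x\<^sup>2 * (1 + s\<^sup>2)))) * indicator {..a} (x\<^sup>2 * (1 + s\<^sup>2))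
            * indicator {0<..} s * indicator {0<..} x"
  have "(\<integral>\<^sup>+x. \<integral>\<^sup>+y. ennreal (exp (- x\<^sup>2) * exp (- y\<^sup>2)) * indicator {..a} (x\<^sup>2 + y\<^sup>2)
            * indicator {0<..} y * indicator {0<..} x \<partial>lborel \<partial>lborel)
      = (\<integral>\<^sup>+x. \<integral>\<^sup>+s. ?ff x s \<partial>lborel \<partial>lborel)"
  proof (rule nn_integral_cong)
    fix x :: real
    show "(\<integral>\<^sup>+y. ennreal (exp (- x\<^sup>2) * exp (- y\<^sup>2)) * indicator {..a} (x\<^sup>2 + y\<^sup>2)
            * indicator {0<..} y * indicator {0<..} x \<partial>lborel) = (\<integral>\<^sup>+s. ?ff x s \<partial>lborel)"
    proof (cases "0 < x")
      case True
      have "(\<integral>\<^sup>+y. ennreal (exp (- x\<^sup>2) * exp (- y\<^sup>2)) * indicator {..a} (x\<^sup>2 + y\<^sup>2)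
            * indicator {0<..} y * indicator {0<..} x \<partial>lborel)
         = \<bar>x\<bar> * (\<integral>\<^sup>+s. ennreal (exp (- x\<^sup>2) * exp (- (0 + x * s)\<^sup>2)) * indicator {..a} (x\<^sup>2 + (0 + x * s)\<^sup>2)
            * indicator {0<..} (0 + x * s) * indicator {0<..} x \<partial>lborel)"
        using True by (intro nn_integral_real_affine) auto
      also have "\<dots> = (\<integral>\<^sup>+s. ?ff x s \<partial>lborel)"
        using True
        by (auto simp: nn_integral_cmult[symmetric] ennreal_mult[symmetric] mult_exp_exp field_simps
              zero_less_mult_iff power_mult_distrib intro!: nn_integral_cong split: split_indicator)
      finally show ?thesis .
    qed simp
  qed
  also have "\<dots> = (\<integral>\<^sup>+s. \<integral>\<^sup>+x. ?ff x s \<partial>lborel \<partial>lborel)"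
    by (rule lborel_pair.Fubini') auto
  also have "\<dots> = (\<integral>\<^sup>+s. ennreal ((1 - exp (- a)) / (2 * (1 + s\<^sup>2))) * indicator {0..} s \<partial>lborel)"
  proof (intro nn_integral_cong_AE AE_I[where N="{0}"])
    show "{s \<in> space lborel. (\<integral>\<^sup>+x. ?ff x s \<partial>lborel) \<noteq> ennreal ((1 - exp (- a)) / (2 * (1 + s\<^sup>2))) * indicator {0..} s} \<subseteq> {0}"
    proof clarify
      fix s :: real assume ne: "(\<integral>\<^sup>+x. ?ff x s \<partial>lborel) \<noteq> ennreal ((1 - exp (- a)) / (2 * (1 + s\<^sup>2))) * indicator {0..} s"
      show "s = 0"
      proof (rule ccontr)
        assume "s \<noteq> 0"
        show False
        proof (cases "0 < s")
          case True
          have "(\<integral>\<^sup>+x. ?ff x s \<partial>lborel) = (\<integral>\<^sup>+x. ennreal (x * exp (- (x\<^sup>2 * (1 + s\<^sup>2)))) * indicator {..a} (x\<^sup>2 * (1 + s\<^sup>2))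
            * indicator {0<..} x \<partial>lborel)"
            using True by (intro nn_integral_cong) (auto split: split_indicator)
          also have "\<dots> = ennreal ((1 - exp (- a)) / (2 * (1 + s\<^sup>2)))"
            using a by (intro inner_x) (auto simp: add_pos_nonneg)
          finally show False using ne True by simp
        next
          case False
          then show False using ne \<open>s \<noteq> 0\<close> by simp
        qed
      qed
    qed
  qed auto
  also have "\<dots> = ennreal ((1 - exp (- a)) / 2 * (pi / 2) - (\<lambda>s. (1 - exp (- a)) / 2 * arctan s) 0)"
  proof (rule nn_integral_FTC_atLeast)
    show "((\<lambda>s. (1 - exp (- a)) / 2 * arctan s) \<longlongrightarrow> (1 - exp (- a)) / 2 * (pi / 2)) at_top"
      by (intro tendsto_intros tendsto_arctan_at_top)
    show "0 \<le> (1 - exp (- a)) / (2 * (1 + x\<^sup>2))" for x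
      using a by (intro divide_nonneg_pos) (auto simp: add_pos_nonneg)
  qed (auto intro!: derivative_eq_intros simp: add_nonneg_eq_0_iff field_simps power2_eq_square)
  also have "\<dots> = ennreal (pi / 4 * (1 - exp (- a)))"
    by (simp add: algebra_simps)
  finally show ?thesis .
qed

lemma full_plane:
  fixes a :: real assumes a: "0 \<le> a"
  shows "(\<integral>\<^sup>+x. \<integral>\<^sup>+y. ennreal (exp (- x\<^sup>2) * exp (- y\<^sup>2)) * indicator {..a} (x\<^sup>2 + y\<^sup>2) \<partial>lborel \<partial>lborel)
       = ennreal (pi * (1 - exp (- a)))"
proof -
  have "(\<integral>\<^sup>+x. \<integral>\<^sup>+y. ennreal (exp (- x\<^sup>2) * exp (- y\<^sup>2)) * indicator {..a} (x\<^sup>2 + y\<^sup>2) \<partial>lborel \<partial>lborel)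
     = (\<integral>\<^sup>+x. 2 * (\<integral>\<^sup>+y. ennreal (exp (- x\<^sup>2) * exp (- y\<^sup>2)) * indicator {..a} (x\<^sup>2 + y\<^sup>2) * indicator {0<..} y \<partial>lborel) \<partial>lborel)"
    by (intro nn_integral_cong nn_integral_even) auto
  also have "\<dots> = 2 * (\<integral>\<^sup>+x. 2 * (\<integral>\<^sup>+y. ennreal (exp (- x\<^sup>2) * exp (- y\<^sup>2)) * indicator {..a} (x\<^sup>2 + y\<^sup>2) * indicator {0<..} y \<partial>lborel) * indicator {0<..} x \<partial>lborel)"
    by (intro nn_integral_even) auto
  also have "\<dots> = 4 * (\<integral>\<^sup>+x. \<integral>\<^sup>+y. ennreal (exp (- x\<^sup>2) * exp (- y\<^sup>2)) * indicator {..a} (x\<^sup>2 + y\<^sup>2)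
            * indicator {0<..} y * indicator {0<..} x \<partial>lborel \<partial>lborel)"
  proof -
    have "(\<integral>\<^sup>+x. 2 * (\<integral>\<^sup>+y. ennreal (exp (- x\<^sup>2) * exp (- y\<^sup>2)) * indicator {..a} (x\<^sup>2 + y\<^sup>2) * indicator {0<..} y \<partial>lborel) * indicator {0<..} x \<partial>lborel)
      = 2 * (\<integral>\<^sup>+x. (\<integral>\<^sup>+y. ennreal (exp (- x\<^sup>2) * exp (- y\<^sup>2)) * indicator {..a} (x\<^sup>2 + y\<^sup>2) * indicator {0<..} y \<partial>lborel) * indicator {0<..} x \<partial>lborel)"
      by (subst nn_integral_cmult[symmetric]) (auto simp: mult.assoc)
    also have "\<dots> = 2 * (\<integral>\<^sup>+x. \<integral>\<^sup>+y. ennreal (exp (- x\<^sup>2) * exp (- y\<^sup>2)) * indicator {..a} (x\<^sup>2 + y\<^sup>2)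
            * indicator {0<..} y * indicator {0<..} x \<partial>lborel \<partial>lborel)"
      by (subst nn_integral_multc) auto
    finally show ?thesis by (simp add: mult.assoc[symmetric])
  qed
  also have "\<dots> = 4 * ennreal (pi / 4 * (1 - exp (- a)))"
    using quadrant[OF a] by simp
  also have "\<dots> = ennreal (pi * (1 - exp (- a)))"
    using a by (subst ennreal_numeral[symmetric], subst ennreal_mult[symmetric]) (auto simp: field_simps)
  finally show ?thesis .
qed

lemma normal_half: "normal_density 0 (sqrt (1/2)) x = exp (- x\<^sup>2) / sqrt pi"
  by (simp add: normal_density_def)

lemma cn_std_sq:
  fixes a :: real assumes a: "0 \<le> a"
  shows "emeasure cn_std {z \<in> space cn_std. (cmod z)\<^sup>2 \<le> a} = ennreal (1 - exp (- a))"
proof -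
  let ?N = "density lborel (normal_density 0 (sqrt (1/2)))"
  have "emeasure cn_std {z \<in> space cn_std. (cmod z)\<^sup>2 \<le> a} = emeasure (?N \<Otimes>\<^sub>M ?N) {p. (fst p)\<^sup>2 + (snd p)\<^sup>2 \<le> a}"
  proof -
    have eq: "(\<lambda>(x,y). Complex x y) = (\<lambda>p. complex_of_real (fst p) + \<i> * complex_of_real (snd p))"
      by (auto simp: Complex_eq)
    have m: "(\<lambda>(x,y). Complex x y) \<in> borel_measurable (?N \<Otimes>\<^sub>M ?N)"
      unfolding eq by measurable
    show ?thesis
      unfolding cn_std_def using m
      by (subst emeasure_distr) (auto simp: cmod_def space_pair_measure intro!: arg_cong2[where f=emeasure] split: prod.splits)
  qed
  also have "\<dots> = (\<integral>\<^sup>+x. \<integral>\<^sup>+y. indicator {p. (fst p)\<^sup>2 + (snd p)\<^sup>2 \<le> a} (x, y) \<partial>?N \<partial>?N)"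
  proof -
    have "prob_space ?N" by (rule prob_space_normal_density) simp
    then have "sigma_finite_measure ?N" by (rule prob_space_imp_sigma_finite)
    note sf = this
    have e: "{p. (fst p)\<^sup>2 + (snd p)\<^sup>2 \<le> a} = {p \<in> space (?N \<Otimes>\<^sub>M ?N). (fst p)\<^sup>2 + (snd p)\<^sup>2 \<le> a}"
      by (auto simp: space_pair_measure)
    have "{p \<in> space (?N \<Otimes>\<^sub>M ?N). (fst p)\<^sup>2 + (snd p)\<^sup>2 \<le> a} \<in> sets (?N \<Otimes>\<^sub>M ?N)"
      by measurable
    then have "{p. (fst p)\<^sup>2 + (snd p)\<^sup>2 \<le> a} \<in> sets (?N \<Otimes>\<^sub>M ?N)" by (subst e)
    then show ?thesis by (rule sigma_finite_measure.emeasure_pair_measure[OF sf])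
  qed
  also have "\<dots> = (\<integral>\<^sup>+x. ennreal (exp (- x\<^sup>2) / sqrt pi) * \<integral>\<^sup>+y. ennreal (exp (- y\<^sup>2) / sqrt pi) * indicator {..a} (x\<^sup>2 + y\<^sup>2) \<partial>lborel \<partial>lborel)"
    by (simp add: nn_integral_density normal_half indicator_def)
  also have "\<dots> = (\<integral>\<^sup>+x. ennreal (1 / pi) * (\<integral>\<^sup>+y. ennreal (exp (- x\<^sup>2) * exp (- y\<^sup>2)) * indicator {..a} (x\<^sup>2 + y\<^sup>2) \<partial>lborel) \<partial>lborel)"
    by (auto simp: nn_integral_cmult[symmetric] ennreal_mult[symmetric] intro!: nn_integral_cong split: split_indicator)
  also have "\<dots> = ennreal (1 / pi) * ennreal (pi * (1 - exp (- a)))"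
    by (simp add: nn_integral_cmult full_plane[OF a])
  also have "\<dots> = ennreal (1 - exp (- a))"
    using a by (subst ennreal_mult[symmetric]) auto
  finally show ?thesis .
qed

lemma sets_cn_std[measurable_cong, simp]: "sets cn_std = sets borel"
  by (simp add: cn_std_def)

lemma space_cn_std[simp]: "space cn_std = UNIV"
  by (simp add: cn_std_def)

lemma prob_space_cn_std: "prob_space cn_std"
proof -
  let ?N = "density lborel (normal_density 0 (sqrt (1/2)))"
  have "prob_space ?N" by (rule prob_space_normal_density) simp
  then have P: "prob_space (?N \<Otimes>\<^sub>M ?N)" by (intro prob_space_pair)
  have eq: "(\<lambda>(x,y). Complex x y) = (\<lambda>p. complex_of_real (fst p) + \<i> * complex_of_real (snd p))"
    by (auto simp: Complex_eq)
  have m: "(\<lambda>(x,y). Complex x y) \<in> measurable (?N \<Otimes>\<^sub>M ?N) borel"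
    unfolding eq by measurable
  show ?thesis unfolding cn_std_def by (rule prob_space.prob_space_distr[OF P m])
qed

lemma cn_std_exp: "distributed cn_std lborel (\<lambda>z. (cmod z)\<^sup>2) (erlang_density 0 1)"
proof (rule erlang_distributedI)
  show "(\<lambda>z. (cmod z)\<^sup>2) \<in> borel_measurable cn_std" by measurable
  fix a :: real assume "0 \<le> a"
  then show "emeasure cn_std {x \<in> space cn_std. (cmod x)\<^sup>2 \<le> a} = ennreal (erlang_CDF 0 1 a)"
    by (simp add: cn_std_sq erlang_CDF_0 del: space_cn_std)
qed simp

lemma prob_space_h_law: "prob_space (h_law t)"
  unfolding h_law_def by (rule prob_space_PiM) (rule prob_space_cn_std)

lemma h_comp_distr:
  assumes "i < t"
  shows "distr (h_law t) cn_std (\<lambda>h. h i) = cn_std"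
  unfolding h_law_def using assms by (intro distr_PiM_component prob_space_cn_std) auto

lemma h_indep: assumes False: "t \<noteq> 0" shows "prob_space.indep_vars (h_law t) (\<lambda>_. cn_std) (\<lambda>i h. h i) {0..<t}"
proof -
  interpret prob_space "h_law t" by (rule prob_space_h_law)
  have rv: "random_variable cn_std (\<lambda>h. h i)" if "i \<in> {0..<t}" for i
    using that unfolding h_law_def by measurable
  show ?thesis
  proof (subst indep_vars_iff_distr_eq_PiM'[OF _ rv])
    show "{0..<t} \<noteq> {}" using False by simp
    have "distr (h_law t) (\<Pi>\<^sub>M i\<in>{0..<t}. cn_std) (\<lambda>x. \<lambda>i\<in>{0..<t}. x i) = distr (h_law t) (h_law t) (\<lambda>x. x)"
      unfolding h_law_def
      by (intro distr_cong) (auto simp: space_PiM PiE_def extensional_def restrict_def fun_eq_iff)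
    also have "\<dots> = h_law t" by simp
    also have "\<dots> = (\<Pi>\<^sub>M i\<in>{0..<t}. distr (h_law t) cn_std (\<lambda>h. h i))"
      by (subst h_law_def, intro PiM_cong refl) (auto simp: h_comp_distr)
    finally show "distr (h_law t) (\<Pi>\<^sub>M i\<in>{0..<t}. cn_std) (\<lambda>x. \<lambda>i\<in>{0..<t}. x i) =
      (\<Pi>\<^sub>M i\<in>{0..<t}. distr (h_law t) cn_std (\<lambda>h. h i))" .
  qed
qed

lemma comp_exp:
  assumes "i < t"
  shows "distributed (h_law t) lborel (\<lambda>h. (cmod (h i))\<^sup>2) (erlang_density 0 1)"
proof (rule erlang_distributedI)
  have m: "(\<lambda>h. h i) \<in> measurable (h_law t) cn_std"
    using assms unfolding h_law_def by (intro measurable_component_singleton) auto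
  have m2: "(\<lambda>z. (cmod z)\<^sup>2) \<in> borel_measurable cn_std" by measurable
  show "(\<lambda>h. (cmod (h i))\<^sup>2) \<in> borel_measurable (h_law t)"
    using measurable_compose[OF m m2] by simp
  fix a :: real assume a: "0 \<le> a"
  have "emeasure (h_law t) {h \<in> space (h_law t). (cmod (h i))\<^sup>2 \<le> a}
      = emeasure (distr (h_law t) cn_std (\<lambda>h. h i)) {z \<in> space cn_std. (cmod z)\<^sup>2 \<le> a}"
    using m by (subst emeasure_distr) (auto intro!: arg_cong2[where f=emeasure])
  also have "\<dots> = ennreal (erlang_CDF 0 1 a)"
    using a by (simp add: h_comp_distr[OF assms] cn_std_sq erlang_CDF_0 del: space_cn_std)
  finally show "emeasure (h_law t) {h \<in> space (h_law t). (cmod (h i))\<^sup>2 \<le> a} = ennreal (erlang_CDF 0 1 a)" .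
qed simp

lemma sqnorm_erlang:
  assumes "1 \<le> k" "k \<le> t"
  shows "distributed (h_law t) lborel (sqnorm_k k) (erlang_density (k - 1) 1)"
proof -
  interpret prob_space "h_law t" by (rule prob_space_h_law)
  have ind: "indep_vars (\<lambda>_. borel) (\<lambda>i h. (cmod (h i))\<^sup>2) {..<k}"
  proof -
    have "indep_vars (\<lambda>_. borel) (\<lambda>i h. (\<lambda>z. (cmod z)\<^sup>2) (h i)) {0..<t}"
      using assms by (intro indep_vars_compose2[OF h_indep]) (auto simp del: space_cn_std)
    moreover have "{..<k} \<subseteq> {0..<t}" using assms by auto
    ultimately show ?thesis by (rule indep_vars_subset)
  qed
  have "distributed (h_law t) lborel (\<lambda>h. \<Sum>i\<in>{..<k}. (cmod (h i))\<^sup>2) (erlang_density ((\<Sum>i\<in>{..<k}. Suc 0) - 1) 1)"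
  proof (rule erlang_distributed_sum)
    show "finite {..<k}" by simp
    have "0 \<in> {..<k}" using assms by simp
    then show "{..<k} \<noteq> {}" by blast
    show "indep_vars (\<lambda>i. borel) (\<lambda>i h. (cmod (h i))\<^sup>2) {..<k}" by (rule ind)
    fix i assume "i \<in> {..<k}"
    then show "distributed (h_law t) lborel (\<lambda>h. (cmod (h i))\<^sup>2) (erlang_density 0 1)"
      using assms by (intro comp_exp) auto
  qed simp
  then show ?thesis by (simp add: sqnorm_k_def[abs_def])
qed

lemma out_F_eq:
  assumes "0 < \<alpha>" "1 \<le> t"
  shows "out_F \<alpha> t = erlang_CDF (t - 1) 1 \<alpha>"
proof -
  interpret prob_space "h_law t" by (rule prob_space_h_law)
  show ?thesis unfolding out_F_def
    using erlang_distributed_le[OF sqnorm_erlang[of t t]] assms by simp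
qed

lemma p_open_eq:
  assumes "0 < \<alpha>" "1 \<le> k" "k \<le> t"
  shows "p_open \<alpha> t k = erlang_CDF (k - 1) 1 (real k * \<alpha>)"
proof -
  interpret prob_space "h_law t" by (rule prob_space_h_law)
  note D = sqnorm_erlang[OF assms(2,3)]
  have "emeasure (h_law t) {h \<in> space (h_law t). sqnorm_k k h < real k * \<alpha>}
      = emeasure (h_law t) (sqnorm_k k -` {..<real k * \<alpha>} \<inter> space (h_law t))"
    by (auto intro!: arg_cong2[where f=emeasure])
  also have "\<dots> = (\<integral>\<^sup>+x. ennreal (erlang_density (k - 1) 1 x) * indicator {..<real k * \<alpha>} x \<partial>lborel)"
    by (rule distributed_emeasure[OF D]) simp
  also have "\<dots> = (\<integral>\<^sup>+x. ennreal (erlang_density (k - 1) 1 x) * indicator {..real k * \<alpha>} x \<partial>lborel)"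
    by (intro nn_integral_cong_AE AE_I[where N="{real k * \<alpha>}"]) (auto split: split_indicator)
  also have "\<dots> = ennreal (erlang_CDF (k - 1) 1 (real k * \<alpha>))"
    by (rule nn_integral_erlang_density) simp
  finally have "emeasure (h_law t) {h \<in> space (h_law t). sqnorm_k k h < real k * \<alpha>} = ennreal (erlang_CDF (k - 1) 1 (real k * \<alpha>))" .
  then show ?thesis unfolding p_open_def
    by (simp add: emeasure_eq_measure)
qed

definition tl_sum :: "real \<Rightarrow> nat \<Rightarrow> real" where
  "tl_sum x k = (\<Sum>m. x ^ (m + k) / fact (m + k))"

lemma summable_exp_terms: "summable (\<lambda>n. x ^ n / fact n :: real)"
  using summable_exp_generic[of x] by (simp add: divide_inverse mult.commute)

lemma summable_tl: "summable (\<lambda>m. x ^ (m + k) / fact (m + k) :: real)"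
  using summable_exp_terms[of x] by (subst summable_iff_shift) simp

lemma exp_split: "exp x = tl_sum x k + (\<Sum>n<k. x ^ n / fact n)"
proof -
  have "exp x = (\<Sum>n. x ^ n / fact n)"
    by (simp add: exp_def divide_inverse mult.commute)
  also have "\<dots> = tl_sum x k + (\<Sum>n<k. x ^ n / fact n)"
    unfolding tl_sum_def by (rule suminf_split_initial_segment[OF summable_exp_terms])
  finally show ?thesis .
qed

lemma erlang_CDF_tl:
  assumes "0 \<le> x" "1 \<le> k"
  shows "erlang_CDF (k - 1) 1 x = exp (- x) * tl_sum x k"
proof -
  have s: "{..k - Suc 0} = {..<k}" using assms by auto
  have "erlang_CDF (k - 1) 1 x = 1 - (\<Sum>n<k. x ^ n * exp (- x) / fact n)"
    using assms by (simp add: erlang_CDF_def s)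
  also have "\<dots> = exp (- x) * (exp x - (\<Sum>n<k. x ^ n / fact n))"
    by (simp add: sum_distrib_left right_diff_distrib exp_minus field_simps)
  also have "\<dots> = exp (- x) * tl_sum x k"
    using exp_split[of x k] by simp
  finally show ?thesis .
qed

lemma tl_lower:
  assumes "0 \<le> x"
  shows "(\<Sum>m<N. x ^ (m + k) / fact (m + k)) \<le> tl_sum x k"
  unfolding tl_sum_def using assms by (intro sum_le_suminf summable_tl) auto

lemma tl_lower1:
  assumes "0 \<le> x"
  shows "x ^ k / fact k \<le> tl_sum x k"
  using tl_lower[OF assms, where N=1 and k=k] by simp

lemma fact_mult_le_nat: "fact k * fact m \<le> (fact (m + k) :: nat)"
proof -
  have "fact k * fact m dvd (fact (m + k) :: nat)" using fact_fact_dvd_fact[of k m] by (simp add: add.commute)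
  then show ?thesis by (rule dvd_imp_le) simp
qed

lemma tl_upper1:
  assumes "0 \<le> x"
  shows "tl_sum x k \<le> x ^ k / fact k * exp x"
proof -
  have "tl_sum x k \<le> (\<Sum>m. x ^ k / fact k * (x ^ m / fact m))"
    unfolding tl_sum_def
  proof (intro suminf_le summable_tl summable_mult summable_exp_terms allI)
    fix m
    have "real (fact k * fact m) \<le> real (fact (m + k))"
      using fact_mult_le_nat[of k m] by linarith
    then have f: "fact k * fact m \<le> (fact (m + k) :: real)" by simp
    have "x ^ (m + k) / fact (m + k) \<le> x ^ (m + k) / (fact k * fact m)"
      using assms f by (intro divide_left_mono) auto
    also have "\<dots> = x ^ k / fact k * (x ^ m / fact m)"
      by (simp add: power_add)
    finally show "x ^ (m + k) / fact (m + k) \<le> x ^ k / fact k * (x ^ m / fact m)" .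
  qed
  also have "\<dots> = x ^ k / fact k * exp x"
    by (subst suminf_mult[OF summable_exp_terms]) (simp add: exp_def divide_inverse mult.commute)
  finally show ?thesis .
qed

lemma fact_pow_le: "fact k * k ^ m \<le> (fact (m + k) :: nat)"
proof (induction m)
  case (Suc m)
  have "fact k * k ^ Suc m = k * (fact k * k ^ m)" by simp
  also have "\<dots> \<le> Suc (m + k) * fact (m + k)"
    using Suc by (intro mult_mono) auto
  finally show ?case by simp
qed simp

lemma tl_upper2:
  assumes "0 < a" "a < 1"
  shows "tl_sum (real k * a) k \<le> (real k * a) ^ k / fact k / (1 - a)"
proof -
  let ?x = "real k * a"
  have "tl_sum ?x k \<le> (\<Sum>m. ?x ^ k / fact k * a ^ m)"
    unfolding tl_sum_def
  proof (intro suminf_le summable_tl summable_mult summable_geometric allI)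
    show "norm a < 1" using assms by simp
    fix m
    have "real (fact k * k ^ m) \<le> real (fact (m + k))"
      using fact_pow_le[of k m] by linarith
    then have f: "fact k * real k ^ m \<le> (fact (m + k) :: real)" by simp
    show "?x ^ (m + k) / fact (m + k) \<le> ?x ^ k / fact k * a ^ m"
    proof (cases "k = 0")
      case True then show ?thesis using assms by (cases m) auto
    next
      case False
      have "?x ^ (m + k) / fact (m + k) \<le> ?x ^ (m + k) / (fact k * real k ^ m)"
        using assms f False by (intro divide_left_mono) auto
      also have "\<dots> = ?x ^ k / fact k * a ^ m"
        using False by (simp add: power_add power_mult_distrib field_simps)
      finally show ?thesis .
    qed
  qed
  also have "\<dots> = ?x ^ k / fact k / (1 - a)"
    using assms by (subst suminf_mult[OF summable_geometric]) (auto simp: suminf_geometric divide_inverse)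
  finally show ?thesis .
qed

lemma ln_lower:
  fixes x :: real assumes x: "0 \<le> x"
  shows "2 * x / (2 + x) \<le> ln (1 + x)"
proof -
  let ?phi = "\<lambda>y::real. ln (1 + y) - 2 * y / (2 + y)"
  have "?phi 0 \<le> ?phi x"
  proof (rule DERIV_nonneg_imp_nondecreasing[OF x])
    fix y :: real assume y0: "0 \<le> y" "y \<le> x"
    then have y: "0 \<le> y \<and> y \<le> x" by simp
    have d: "(?phi has_real_derivative (1 / (1 + y) - 4 / (2 + y)\<^sup>2)) (at y)"
      using y by (auto intro!: derivative_eq_intros simp: field_simps power2_eq_square)
    have eq: "1 / (1 + y) - 4 / (2 + y)\<^sup>2 = y\<^sup>2 / ((1 + y) * (2 + y)\<^sup>2)"
    proof -
      have p1: "1 + y \<noteq> 0" and p2: "(2 + y)\<^sup>2 \<noteq> 0" using y by auto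
      show ?thesis using p1 p2 by (simp add: divide_simps) (simp add: power2_eq_square algebra_simps)
    qed
    have "0 \<le> y\<^sup>2 / ((1 + y) * (2 + y)\<^sup>2)" using y by simp
    then show "\<exists>d. (?phi has_real_derivative d) (at y) \<and> 0 \<le> d"
      using d eq by metis
  qed
  then show ?thesis by simp
qed

lemma exp2_le:
  assumes "1 \<le> k"
  shows "exp 2 \<le> (1 + 1 / real k) ^ (2 * k + 1)"
proof -
  have kpos: "0 < real k" using assms by simp
  have "2 = real (2 * k + 1) * (2 * (1 / real k) / (2 + 1 / real k))"
    using kpos by (simp add: field_simps)
  also have "\<dots> \<le> real (2 * k + 1) * ln (1 + 1 / real k)"
    using kpos by (intro mult_left_mono ln_lower) auto
  finally have "exp 2 \<le> exp (real (2 * k + 1) * ln (1 + 1 / real k))" by simp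
  also have "\<dots> = exp (ln (1 + 1 / real k)) ^ (2 * k + 1)"
    by (rule exp_of_nat_mult)
  also have "\<dots> = (1 + 1 / real k) ^ (2 * k + 1)"
    using kpos by (subst exp_ln) (auto simp: add_pos_pos)
  finally show ?thesis .
qed

lemma stirling_upper:
  "(fact (n + 1))\<^sup>2 * exp (2 * real (n + 1)) \<le> exp 2 * real (n + 1) ^ (2 * n + 3)"
proof (induction n)
  case 0
  then show ?case by simp
next
  case (Suc n)
  let ?a = "real (n + 1)" and ?b = "real (n + 2)"
  have e: "exp 2 * ?a ^ (2 * n + 3) \<le> ?b ^ (2 * n + 3)"
  proof -
    have "exp 2 \<le> (1 + 1 / ?a) ^ (2 * (n + 1) + 1)"
      by (rule exp2_le) simp
    also have "(1 + 1 / ?a) = ?b / ?a" by (simp add: field_simps)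
    finally have "exp 2 \<le> (?b / ?a) ^ (2 * n + 3)" by (simp add: numeral_eq_Suc)
    then have "exp 2 * ?a ^ (2 * n + 3) \<le> (?b / ?a) ^ (2 * n + 3) * ?a ^ (2 * n + 3)"
      by (intro mult_right_mono) auto
    also have "\<dots> = ?b ^ (2 * n + 3)"
      by (simp add: power_divide)
    finally show ?thesis .
  qed
  have "(fact (Suc n + 1))\<^sup>2 * exp (2 * real (Suc n + 1))
      = ?b\<^sup>2 * exp 2 * ((fact (n + 1))\<^sup>2 * exp (2 * real (n + 1)))"
  proof -
    have f: "(fact (Suc n + 1)::real) = ?b * fact (n+1)" by simp
    have x: "exp (2 * real (Suc n + 1)) = exp 2 * exp (2 * real (n + 1))"
      by (simp add: exp_add[symmetric] algebra_simps)
    show ?thesis unfolding f x by (simp add: power_mult_distrib mult_ac)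
  qed
  also have "\<dots> \<le> ?b\<^sup>2 * exp 2 * (exp 2 * ?a ^ (2 * n + 3))"
    by (intro mult_left_mono Suc.IH) auto
  also have "\<dots> \<le> ?b\<^sup>2 * exp 2 * ?b ^ (2 * n + 3)"
    by (intro mult_left_mono e) auto
  also have "\<dots> = exp 2 * real (Suc n + 1) ^ (2 * Suc n + 3)"
    by (simp add: power2_eq_square algebra_simps numeral_eq_Suc)
  finally show ?case .
qed

lemma fact_le_pow: "fact (i + k) \<le> fact k * (k + i) ^ i"
proof (induction i)
  case (Suc i)
  have "fact (Suc i + k) = Suc (i + k) * fact (i + k)" by simp
  also have "\<dots> \<le> Suc (i + k) * (fact k * (k + i) ^ i)"
    using Suc by (intro mult_left_mono) auto
  also have "\<dots> \<le> Suc (i + k) * (fact k * (k + Suc i) ^ i)"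
    by (intro mult_left_mono power_mono) auto
  also have "\<dots> = fact k * (k + Suc i) ^ Suc i" by (simp add: algebra_simps)
  finally show ?case .
qed simp

lemma pow_shift_le:
  fixes k :: real and i :: nat
  assumes k: "0 < k" and ik: "real i ^ 2 \<le> k"
  shows "(k + real i) ^ i \<le> exp 1 * k ^ i"
proof -
  have "(k + real i) ^ i = k ^ i * (1 + real i / k) ^ i"
    using k by (simp add: power_mult_distrib[symmetric] field_simps)
  also have "(1 + real i / k) ^ i \<le> exp (real i / k) ^ i"
  proof (rule power_mono)
    have "0 \<le> real i / k" using k by simp
    then show "0 \<le> 1 + real i / k" by simp
  qed (rule exp_ge_add_one_self)
  also have "exp (real i / k) ^ i = exp (real i * (real i / k))"
    by (subst exp_of_nat_mult[symmetric]) simp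
  also have "\<dots> \<le> exp 1"
    using ik k by (simp add: power2_eq_square)
  finally show ?thesis using k by (simp add: mult.commute mult_left_mono)
qed

lemma term_lower:
  assumes k: "1 \<le> k" and ik: "real i ^ 2 \<le> real k"
  shows "exp (-1) * (real k ^ k / fact k) \<le> real k ^ (i + k) / fact (i + k)"
proof -
  have kp: "0 < real k" using k by simp
  have "real (fact (i + k)) \<le> real (fact k * (k + i) ^ i)"
    using fact_le_pow[of i k] by linarith
  then have f: "(fact (i + k) :: real) \<le> fact k * (real k + real i) ^ i" by simp
  also have "\<dots> \<le> fact k * (exp 1 * real k ^ i)"
    using pow_shift_le[OF kp ik] by (intro mult_left_mono) auto
  finally have f2: "(fact (i + k) :: real) \<le> fact k * (exp 1 * real k ^ i)" .
  have "exp (-1) * (real k ^ k / fact k) = real k ^ (i + k) / (fact k * (exp 1 * real k ^ i))"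
    using kp by (simp add: exp_minus power_add field_simps)
  also have "\<dots> \<le> real k ^ (i + k) / fact (i + k)"
    using f2 kp by (intro divide_left_mono) auto
  finally show ?thesis .
qed

lemma poisson_median_lower:
  assumes k: "1 \<le> k"
  shows "exp (-2) \<le> exp (- real k) * tl_sum (real k) k"
proof -
  have kp: "0 < real k" using k by simp
  define N where "N = nat \<lfloor>sqrt (real k)\<rfloor> + 1"
  have fl: "real (nat \<lfloor>sqrt (real k)\<rfloor>) = of_int \<lfloor>sqrt (real k)\<rfloor>" by simp
  have NS: "sqrt (real k) < real N"
    unfolding N_def using fl by linarith
  then have N2: "real k \<le> (real N)\<^sup>2"
  proof -
    have "(sqrt (real k)) ^ 2 \<le> (real N) ^ 2" using NS by (intro power_mono) auto
    then show ?thesis by simp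
  qed
  have iN: "real i ^ 2 \<le> real k" if "i < N" for i
  proof -
    have "real i \<le> of_int \<lfloor>sqrt (real k)\<rfloor>" using that fl unfolding N_def by linarith
    also have "\<dots> \<le> sqrt (real k)" by simp
    finally have "real i ^ 2 \<le> (sqrt (real k)) ^ 2" by (intro power_mono) auto
    then show ?thesis by simp
  qed
  define s where "s = exp (- real k) * (real k ^ k / fact k)"
  have sp: "0 < s" unfolding s_def using kp by simp
  have "(\<Sum>i<N. exp (-1) * (real k ^ k / fact k)) \<le> (\<Sum>i<N. real k ^ (i + k) / fact (i + k))"
    by (intro sum_mono term_lower k iN) auto
  also have "\<dots> \<le> tl_sum (real k) k"
    by (rule tl_lower) simp
  finally have T: "real N * exp (-1) * (real k ^ k / fact k) \<le> tl_sum (real k) k" by simp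
  have F1: "exp (-1) * (real N * s) \<le> exp (- real k) * tl_sum (real k) k"
    using mult_left_mono[OF T, of "exp (- real k)"] unfolding s_def by (simp add: mult_ac)
  moreover have NS1: "exp (-1) \<le> real N * s"
  proof -
    have st: "(fact k)\<^sup>2 * exp (2 * real k) \<le> exp 2 * real k ^ (2 * k + 1)"
    proof -
      obtain n where kn: "k = Suc n" using k by (cases k) auto
      have e: "2 * k + 1 = 2 * n + 3" using kn by simp
      show ?thesis using stirling_upper[of n] unfolding e by (simp add: kn)
    qed
    have "1 \<le> s\<^sup>2 * exp 2 * real k"
    proof -
      have "s\<^sup>2 * exp 2 * real k = exp 2 * real k ^ (2 * k + 1) / ((fact k)\<^sup>2 * exp (2 * real k))"
      proof -
        have e2: "exp (- real k) ^ 2 = 1 / exp (2 * real k)"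
          by (simp add: power2_eq_square mult_exp_exp exp_minus[symmetric] exp_of_nat_mult)
             (simp add: exp_minus field_simps)
        have "s\<^sup>2 = real k ^ (2 * k) / ((fact k)\<^sup>2 * exp (2 * real k))"
          unfolding s_def by (simp add: power_mult_distrib power_divide e2 power_mult[symmetric] mult.commute)
        then show ?thesis using kp by (simp add: power_add field_simps)
      qed
      also have "\<dots> \<ge> 1" using st by simp
      finally show ?thesis .
    qed
    also have "\<dots> \<le> s\<^sup>2 * exp 2 * (real N)\<^sup>2"
      using N2 by (intro mult_left_mono) auto
    finally have "1 \<le> (real N * s)\<^sup>2 * exp 2" by (simp add: power_mult_distrib mult_ac)
    then have "exp (-1) ^ 2 \<le> (real N * s)\<^sup>2"
      by (simp add: exp_minus field_simps power2_eq_square mult_exp_exp)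
    then show ?thesis
      by (rule power2_le_imp_le) (use sp in simp)
  qed
  have "exp (-1) * exp (-1) \<le> exp (-1) * (real N * s)"
    by (rule mult_left_mono[OF NS1]) simp
  then have "exp (-1) * exp (-1) \<le> exp (- real k) * tl_sum (real k) k"
    using F1 by (rule order_trans)
  then show ?thesis by (simp add: mult_exp_exp)
qed

lemma erlang_CDF_tl':
  assumes "0 \<le> x" "1 \<le> k"
  shows "erlang_CDF (k - Suc 0) 1 x = exp (- x) * tl_sum x k"
  using erlang_CDF_tl[OF assms] by simp

definition gfun :: "real \<Rightarrow> nat \<Rightarrow> real" where
  "gfun \<alpha> k = (real k * \<alpha>) ^ k * exp (- \<alpha> * real k) / fact k"

lemma kappa_props:
  assumes "1 \<le> t"
  shows "kappa \<alpha> t \<in> {1..t} \<and> (\<forall>j\<in>{1..t}. p_open \<alpha> t (kappa \<alpha> t) \<le> p_open \<alpha> t j)"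
proof -
  let ?S = "p_open \<alpha> t ` {1..t}"
  have fin: "finite ?S" and ne: "?S \<noteq> {}" using assms by auto
  have "Min ?S \<in> ?S" using fin ne by (rule Min_in)
  then obtain k where k: "k \<in> {1..t}" "p_open \<alpha> t k = Min ?S" by auto
  have "\<forall>j\<in>{1..t}. p_open \<alpha> t k \<le> p_open \<alpha> t j"
    using k fin by auto
  with k have ex: "\<exists>k. k \<in> {1..t} \<and> (\<forall>j\<in>{1..t}. p_open \<alpha> t k \<le> p_open \<alpha> t j)" by blast
  show ?thesis unfolding kappa_def by (rule LeastI_ex[OF ex])
qed

lemma gfun_step:
  assumes a: "0 < \<alpha>" and k: "1 \<le> k"
  shows "gfun \<alpha> (Suc k) \<le> gfun \<alpha> k"
proof -
  have kp: "0 < real k" using k by simp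
  have A: "\<alpha> * exp (- \<alpha>) \<le> exp (-1)"
  proof -
    have "\<alpha> \<le> exp (\<alpha> - 1)" using exp_ge_add_one_self[of "\<alpha> - 1"] by simp
    then have "\<alpha> * exp (- \<alpha>) \<le> exp (\<alpha> - 1) * exp (- \<alpha>)" by (intro mult_right_mono) auto
    also have "\<dots> = exp (-1)" by (simp add: mult_exp_exp)
    finally show ?thesis .
  qed
  have B: "(real k + 1) ^ k \<le> exp 1 * real k ^ k"
  proof -
    have "(real k + 1) ^ k = real k ^ k * (1 + 1 / real k) ^ k"
      using kp by (simp add: power_mult_distrib[symmetric] field_simps)
    also have "(1 + 1 / real k) ^ k \<le> exp (1 / real k) ^ k"
    proof (rule power_mono)
      show "0 \<le> 1 + 1 / real k" using kp by simp
    qed (rule exp_ge_add_one_self)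
    also have "exp (1 / real k) ^ k = exp 1"
      using kp by (subst exp_of_nat_mult[symmetric]) simp
    finally show ?thesis using kp by (simp add: mult.commute mult_left_mono)
  qed
  have C: "(real k + 1) ^ k * (\<alpha> * exp (- \<alpha>)) \<le> real k ^ k"
  proof -
    have "(real k + 1) ^ k * (\<alpha> * exp (- \<alpha>)) \<le> (exp 1 * real k ^ k) * exp (-1)"
      using A B a by (intro mult_mono) auto
    also have "\<dots> = real k ^ k" by (simp add: mult_exp_exp[symmetric] mult_ac)
      (simp add: exp_minus)
    finally show ?thesis .
  qed
  have "gfun \<alpha> (Suc k) = ((real k + 1) ^ k * (\<alpha> * exp (- \<alpha>))) * (\<alpha> ^ k * exp (- \<alpha> * real k) / fact k)"
  proof -
    have p1: "(real (Suc k) * \<alpha>) ^ Suc k = (real k + 1) * ((real k + 1) ^ k * \<alpha> * \<alpha> ^ k)"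
    proof -
      have "(real (Suc k) * \<alpha>) ^ Suc k = (real k + 1) ^ Suc k * \<alpha> ^ Suc k"
        by (simp only: power_mult_distrib of_nat_Suc add.commute)
      then show ?thesis by (simp only: power_Suc mult_ac)
    qed
    have p2: "exp (- \<alpha> * real (Suc k)) = exp (- \<alpha>) * exp (- \<alpha> * real k)"
      by (simp add: mult_exp_exp algebra_simps)
    have p3: "(fact (Suc k) :: real) = (real k + 1) * fact k"
      by (simp add: algebra_simps)
    have nz: "(real k + 1) * fact k \<noteq> (0::real)" using kp by simp
    show ?thesis unfolding gfun_def p1 p2 p3 using nz
      by (simp only: divide_simps) (simp add: mult_ac)
  qed
  also have "\<dots> \<le> real k ^ k * (\<alpha> ^ k * exp (- \<alpha> * real k) / fact k)"
    using C a by (intro mult_right_mono) auto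
  also have "\<dots> = gfun \<alpha> k"
    unfolding gfun_def by (simp add: power_mult_distrib)
  finally show ?thesis .
qed

lemma gfun_mono:
  assumes a: "0 < \<alpha>" and "1 \<le> m" "m \<le> n"
  shows "gfun \<alpha> n \<le> gfun \<alpha> m"
  using assms(3)
proof (induction n rule: dec_induct)
  case (step n)
  then show ?case using gfun_step[OF a, of n] assms(2) by linarith
qed simp

lemma p_open_lower:
  assumes a: "0 < \<alpha>" and k: "1 \<le> k" "k \<le> t"
  shows "gfun \<alpha> k \<le> p_open \<alpha> t k"
proof -
  have "p_open \<alpha> t k = exp (- (real k * \<alpha>)) * tl_sum (real k * \<alpha>) k"
    using a k by (simp add: p_open_eq erlang_CDF_tl')
  also have "\<dots> \<ge> exp (- (real k * \<alpha>)) * ((real k * \<alpha>) ^ k / fact k)"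
    using a by (intro mult_left_mono tl_lower1) auto
  finally show ?thesis unfolding gfun_def by (simp add: mult_ac)
qed

lemma p_open_upper:
  assumes a: "0 < \<alpha>" "\<alpha> < 1" and t: "1 \<le> t"
  shows "p_open \<alpha> t t \<le> gfun \<alpha> t / (1 - \<alpha>)"
proof -
  have "p_open \<alpha> t t = exp (- (real t * \<alpha>)) * tl_sum (real t * \<alpha>) t"
    using a t by (simp add: p_open_eq erlang_CDF_tl')
  also have "\<dots> \<le> exp (- (real t * \<alpha>)) * ((real t * \<alpha>) ^ t / fact t / (1 - \<alpha>))"
    using a by (intro mult_left_mono tl_upper2) auto
  finally show ?thesis unfolding gfun_def by (simp add: mult_ac)
qed

lemma out_F_bounds:
  assumes a: "0 < \<alpha>" and t: "1 \<le> t"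
  shows "exp (- \<alpha>) * (\<alpha> ^ t / fact t) \<le> out_F \<alpha> t \<and> out_F \<alpha> t \<le> \<alpha> ^ t / fact t"
proof -
  have eq: "out_F \<alpha> t = exp (- \<alpha>) * tl_sum \<alpha> t"
    using a t by (simp add: out_F_eq erlang_CDF_tl')
  have L: "exp (- \<alpha>) * (\<alpha> ^ t / fact t) \<le> exp (- \<alpha>) * tl_sum \<alpha> t"
    using a by (intro mult_left_mono tl_lower1) auto
  have U: "exp (- \<alpha>) * tl_sum \<alpha> t \<le> exp (- \<alpha>) * (\<alpha> ^ t / fact t * exp \<alpha>)"
    using a by (intro mult_left_mono tl_upper1) auto
  have E: "exp (- \<alpha>) * (\<alpha> ^ t / fact t * exp \<alpha>) = \<alpha> ^ t / fact t"
    by (simp add: exp_minus field_simps)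
  show ?thesis unfolding eq using L U E by linarith
qed

lemma p_open_le1: "p_open \<alpha> t k \<le> 1"
proof -
  interpret prob_space "h_law t" by (rule prob_space_h_law)
  show ?thesis unfolding p_open_def by (rule prob_le_1)
qed

lemma p_open_ge_big:
  assumes a: "1 \<le> \<alpha>" and k: "1 \<le> k" "k \<le> t"
  shows "exp (-2) \<le> p_open \<alpha> t k"
proof -
  interpret prob_space "h_law t" by (rule prob_space_h_law)
  have m: "sqnorm_k k \<in> borel_measurable (h_law t)"
    using distributed_measurable[OF sqnorm_erlang[OF k]] by simp
  have "exp (-2) \<le> exp (- real k) * tl_sum (real k) k"
    by (rule poisson_median_lower[OF k(1)])
  also have "\<dots> = p_open 1 t k"
    using k by (simp add: p_open_eq erlang_CDF_tl')
  also have "\<dots> \<le> p_open \<alpha> t k"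
    unfolding p_open_def
  proof (rule finite_measure_mono)
    show "{h \<in> space (h_law t). sqnorm_k k h < real k * 1} \<subseteq> {h \<in> space (h_law t). sqnorm_k k h < real k * \<alpha>}"
    proof clarify
      fix h assume "sqnorm_k k h < real k * 1"
      also have "real k * 1 \<le> real k * \<alpha>" using a by (intro mult_left_mono) auto
      finally show "sqnorm_k k h < real k * \<alpha>" .
    qed
    show "{h \<in> space (h_law t). sqnorm_k k h < real k * \<alpha>} \<in> sets (h_law t)"
      using m by measurable
  qed
  finally show ?thesis .
qed

theorem proposition1:
  fixes \<alpha> :: real
  assumes "\<alpha> > 0"
  shows "out_F \<alpha> \<in> \<Theta>(\<lambda>t. \<alpha> ^ t / fact t)
     \<and> (\<alpha> < 1 \<longrightarrow> out_G \<alpha> \<in> \<Theta>(\<lambda>t. (real t * \<alpha>) ^ t * exp (- \<alpha> * real t) / fact t))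
     \<and> (\<alpha> \<ge> 1 \<longrightarrow> out_G \<alpha> \<in> \<Theta>(\<lambda>t. 1))"
proof (intro conjI impI)
  have a: "0 < \<alpha>" by fact
  show "out_F \<alpha> \<in> \<Theta>(\<lambda>t. \<alpha> ^ t / fact t)"
  proof (rule bigthetaI'[of "exp (- \<alpha>)" 1])
    show "eventually (\<lambda>t. exp (- \<alpha>) * norm (\<alpha> ^ t / fact t) \<le> norm (out_F \<alpha> t) \<and>
        norm (out_F \<alpha> t) \<le> 1 * norm (\<alpha> ^ t / fact t)) at_top"
      using eventually_ge_at_top[of "1::nat"]
    proof eventually_elim
      case (elim t)
      have b: "exp (- \<alpha>) * (\<alpha> ^ t / fact t) \<le> out_F \<alpha> t \<and> out_F \<alpha> t \<le> \<alpha> ^ t / fact t"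
        by (rule out_F_bounds[OF a elim])
      have p: "0 \<le> \<alpha> ^ t / fact t" using a by simp
      have "0 \<le> exp (- \<alpha>) * (\<alpha> ^ t / fact t)" using p by (intro mult_nonneg_nonneg) auto
      then have q: "0 \<le> out_F \<alpha> t" using b by linarith
      show ?case using b p q a by simp
    qed
  qed auto
  show "out_G \<alpha> \<in> \<Theta>(\<lambda>t. (real t * \<alpha>) ^ t * exp (- \<alpha> * real t) / fact t)" if a1: "\<alpha> < 1"
  proof (rule bigthetaI'[of 1 "1 / (1 - \<alpha>)"])
    show "eventually (\<lambda>t. 1 * norm ((real t * \<alpha>) ^ t * exp (- \<alpha> * real t) / fact t) \<le> norm (out_G \<alpha> t) \<and>
        norm (out_G \<alpha> t) \<le> 1 / (1 - \<alpha>) * norm ((real t * \<alpha>) ^ t * exp (- \<alpha> * real t) / fact t)) at_top"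
      using eventually_ge_at_top[of "1::nat"]
    proof eventually_elim
      case (elim t)
      note kp = kappa_props[OF elim, of \<alpha>]
      have g: "(real t * \<alpha>) ^ t * exp (- \<alpha> * real t) / fact t = gfun \<alpha> t" by (simp add: gfun_def)
      have gp: "0 \<le> gfun \<alpha> t" unfolding gfun_def using a by simp
      have lo: "gfun \<alpha> t \<le> out_G \<alpha> t"
      proof -
        have "gfun \<alpha> t \<le> gfun \<alpha> (kappa \<alpha> t)"
          using kp a by (intro gfun_mono) auto
        also have "\<dots> \<le> out_G \<alpha> t"
          unfolding out_G_def using kp a by (intro p_open_lower) auto
        finally show ?thesis .
      qed
      have up: "out_G \<alpha> t \<le> gfun \<alpha> t / (1 - \<alpha>)"
      proof -
        have "out_G \<alpha> t \<le> p_open \<alpha> t t" unfolding out_G_def using kp elim by auto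
        also have "\<dots> \<le> gfun \<alpha> t / (1 - \<alpha>)" by (rule p_open_upper[OF a a1 elim])
        finally show ?thesis .
      qed
      show ?case unfolding g using lo up gp by simp
    qed
  qed (use a1 in auto)
  show "out_G \<alpha> \<in> \<Theta>(\<lambda>t. 1)" if a1: "1 \<le> \<alpha>"
  proof (rule bigthetaI'[of "exp (-2)" 1])
    show "eventually (\<lambda>t. exp (-2) * norm (1::real) \<le> norm (out_G \<alpha> t) \<and>
        norm (out_G \<alpha> t) \<le> 1 * norm (1::real)) at_top"
      using eventually_ge_at_top[of "1::nat"]
    proof eventually_elim
      case (elim t)
      note kp = kappa_props[OF elim, of \<alpha>]
      have lo: "exp (-2) \<le> out_G \<alpha> t"
        unfolding out_G_def using kp a1 by (intro p_open_ge_big) auto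
      have up: "out_G \<alpha> t \<le> 1" unfolding out_G_def by (rule p_open_le1)
      have "0 \<le> out_G \<alpha> t" using lo exp_ge_zero[of "-2"] by linarith
      then show ?case using lo up by simp
    qed
  qed auto
qed

end
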